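(* Let $G$ be a graph, $t\in\mathbb{N}$, and let $x,y\in V(G)$ be distinct non-adjacent vertices such that $G$ contains $t+3$ pairwise internally vertex-disjoint paths between $x$ and $y$. Then $(G,t)$ has a solution if and only if $(G+xy,t)$ has a solution, where $G+xy$ is $G$ with the edge $xy$ added.
   Context: A solution for $(G,t)$ is a set $S\subseteq V(G)$ with $|S|\le t$ and $\mathrm{tw}(G-S)\le 2$, where $\mathrm{tw}$ is treewidth. *)

theory Defs
  imports Main
begin

definition sgraph :: "'a set \<Rightarrow> 'a set set \<Rightarrow> bool" where
  "sgraph V E \<longleftrightarrow> finite V \<and> (\<forall>e\<in>E. e \<subseteq> V \<and> card e = 2)"

definition is_walk :: "'a set set \<Rightarrow> 'a list \<Rightarrow> bool" where
  "is_walk E xs \<longleftrightarrow> xs \<noteq> [] \<and> (\<forall>i. Suc i < length xs \<longrightarrow> {xs ! i, xs ! Suc i} \<in> E)"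

definition is_path :: "'a set \<Rightarrow> 'a set set \<Rightarrow> 'a \<Rightarrow> 'a \<Rightarrow> 'a list \<Rightarrow> bool" where
  "is_path V E u v xs \<longleftrightarrow> is_walk E xs \<and> distinct xs \<and> set xs \<subseteq> V \<and> hd xs = u \<and> last xs = v"

definition connected_set :: "'a set set \<Rightarrow> 'a set \<Rightarrow> bool" where
  "connected_set E S \<longleftrightarrow> (\<forall>u\<in>S. \<forall>v\<in>S. \<exists>xs. is_walk E xs \<and> set xs \<subseteq> S \<and> hd xs = u \<and> last xs = v)"

definition is_tree :: "'b set \<Rightarrow> 'b set set \<Rightarrow> bool" where
  "is_tree I F \<longleftrightarrow> sgraph I F \<and> I \<noteq> {} \<and> connected_set F I \<and> card F + 1 = card I"

definition tree_decomposition ::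
  "'a set \<Rightarrow> 'a set set \<Rightarrow> 'b set \<Rightarrow> 'b set set \<Rightarrow> ('b \<Rightarrow> 'a set) \<Rightarrow> bool" where
  "tree_decomposition V E I F B \<longleftrightarrow>
     is_tree I F \<and>
     (\<forall>i\<in>I. B i \<subseteq> V) \<and>
     (\<forall>v\<in>V. \<exists>i\<in>I. v \<in> B i) \<and>
     (\<forall>e\<in>E. \<exists>i\<in>I. e \<subseteq> B i) \<and>
     (\<forall>v\<in>V. connected_set F {i\<in>I. v \<in> B i})"

definition treewidth_le :: "'a set \<Rightarrow> 'a set set \<Rightarrow> nat \<Rightarrow> bool" where
  "treewidth_le V E k \<longleftrightarrow>
     (\<exists>(I::nat set) F B. tree_decomposition V E I F B \<and> (\<forall>i\<in>I. card (B i) \<le> k + 1))"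

definition del_verts_E :: "'a set set \<Rightarrow> 'a set \<Rightarrow> 'a set set" where
  "del_verts_E E S = {e\<in>E. e \<inter> S = {}}"

definition is_solution :: "'a set \<Rightarrow> 'a set set \<Rightarrow> nat \<Rightarrow> 'a set \<Rightarrow> bool" where
  "is_solution V E t S \<longleftrightarrow> S \<subseteq> V \<and> card S \<le> t \<and> treewidth_le (V - S) (del_verts_E E S) 2"

definition has_solution :: "'a set \<Rightarrow> 'a set set \<Rightarrow> nat \<Rightarrow> bool" where
  "has_solution V E t \<longleftrightarrow> (\<exists>S. is_solution V E t S)"

end

theory Submission
  imports Defs
begin
inductive_set rset :: "'b set set \<Rightarrow> 'b set \<Rightarrow> 'b set" for F :: "'b set set" and R :: "'b set" where
  base: "r \<in> R \<Longrightarrow> r \<in> rset F R"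
| step: "u \<in> rset F R \<Longrightarrow> {u, w} \<in> F \<Longrightarrow> w \<in> rset F R"

lemma rset_mono:
  assumes "R \<subseteq> R'" "F \<subseteq> F'" shows "rset F R \<subseteq> rset F' R'"
proof
  fix v assume "v \<in> rset F R" then show "v \<in> rset F' R'"
    by induct (insert assms, auto intro: rset.intros)
qed

lemma rset_empty: "rset {} R = R"
proof
  show "rset {} R \<subseteq> R"
  proof
    fix v assume "v \<in> rset {} R" then show "v \<in> R" by induct auto
  qed
qed (auto intro: rset.base)

lemma walk_rset:
  assumes "is_walk F xs" shows "set xs \<subseteq> rset F {hd xs}"
proof -
  have "\<forall>m. m < length xs \<longrightarrow> xs ! m \<in> rset F {hd xs}"
  proof
    fix m show "m < length xs \<longrightarrow> xs ! m \<in> rset F {hd xs}"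
    proof (induct m)
      case 0 then show ?case using assms by (auto simp: is_walk_def hd_conv_nth intro: rset.base)
    next
      case (Suc m)
      show ?case
      proof
        assume "Suc m < length xs"
        then have "xs ! m \<in> rset F {hd xs}" "{xs ! m, xs ! Suc m} \<in> F"
          using Suc assms by (auto simp: is_walk_def)
        then show "xs ! Suc m \<in> rset F {hd xs}" by (rule rset.step)
      qed
    qed
  qed
  then show ?thesis by (auto simp: in_set_conv_nth)
qed

lemma count_lemma:
  assumes "finite F"
  shows "finite I \<Longrightarrow> (\<forall>e\<in>F. \<exists>a b. e = {a,b}) \<Longrightarrow> finite R \<Longrightarrow> I \<subseteq> rset F R
         \<Longrightarrow> card I \<le> card F + card R"
  using assms
proof (induct F arbitrary: R rule: finite_induct)
  case empty
  then show ?case by (simp add: rset_empty card_mono)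
next
  case (insert e F)
  obtain a b where e: "e = {a,b}" using insert.prems by auto
  have cF: "card (insert e F) = card F + 1" using insert.hyps by simp
  have pF: "\<forall>e\<in>F. \<exists>a b. e = {a,b}" using insert.prems by auto
  have gen: "rset (insert e F) R \<subseteq> rset F (insert c R)"
    if cc: "{c,d} = {a,b}" and dR: "d \<in> rset F (insert c R)" for c d
  proof
    fix v assume "v \<in> rset (insert e F) R" then show "v \<in> rset F (insert c R)"
    proof induct
      case (base r) then show ?case by (auto intro: rset.base)
    next
      case (step u w)
      show ?case
      proof (cases "{u,w} \<in> F")
        case True then show ?thesis using step by (auto intro: rset.step)
      next
        case False
        then have "{u,w} = {a,b}" using step e by auto
        then have "w = a \<or> w = b" by blast
        then have "w = c \<or> w = d" using cc by blast
        then show ?thesis using dR by (auto intro: rset.base)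
      qed
    qed
  qed
  show ?case
  proof (cases "a \<in> rset F (insert b R)")
    case True
    have "rset (insert e F) R \<subseteq> rset F (insert b R)" using gen[of b a] True by (simp add: insert_commute)
    then have "I \<subseteq> rset F (insert b R)" using insert.prems(4) by blast
    then have "card I \<le> card F + card (insert b R)" using insert.hyps(3) insert.prems pF by auto
    also have "\<dots> \<le> card F + card R + 1" using insert.prems(3) by (simp add: card_insert_if)
    finally show ?thesis using cF by simp
  next
    case F1: False
    show ?thesis
    proof (cases "b \<in> rset F (insert a R)")
      case True
      have "rset (insert e F) R \<subseteq> rset F (insert a R)" using gen[of a b] True by simp
      then have "I \<subseteq> rset F (insert a R)" using insert.prems(4) by blast
      then have "card I \<le> card F + card (insert a R)" using insert.hyps(3) insert.prems pF by auto
      also have "\<dots> \<le> card F + card R + 1" using insert.prems(3) by (simp add: card_insert_if)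
      finally show ?thesis using cF by simp
    next
      case False
      have aR: "a \<notin> rset F R" using F1 rset_mono[of R "insert b R" F F] by auto
      have bR: "b \<notin> rset F R" using False rset_mono[of R "insert a R" F F] by auto
      have "rset (insert e F) R \<subseteq> rset F R"
      proof
        fix v assume "v \<in> rset (insert e F) R" then show "v \<in> rset F R"
        proof induct
          case (base r) then show ?case by (auto intro: rset.base)
        next
          case (step u w)
          show ?case
          proof (cases "{u,w} \<in> F")
            case True then show ?thesis using step by (auto intro: rset.step)
          next
            case False
            then have "{u,w} = {a,b}" using step e by auto
            then have "u = a \<or> u = b" by blast
            then show ?thesis using step aR bR by auto
          qed
        qed
      qed
      then have "I \<subseteq> rset F R" using insert.prems by auto
      then have "card I \<le> card F + card R" using insert.hyps(3) insert.prems pF by auto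
      then show ?thesis using cF by simp
    qed
  qed
qed

lemma tree_cut:
  assumes "is_tree I F" "{i,j} \<in> F"
  shows "i \<notin> rset (F - {{i,j}}) {j}"
proof
  assume ij: "i \<in> rset (F - {{i,j}}) {j}"
  let ?Fe = "F - {{i,j}}"
  have sub: "rset F {j} \<subseteq> rset ?Fe {j}"
  proof
    fix v assume "v \<in> rset F {j}" then show "v \<in> rset ?Fe {j}"
    proof induct
      case (base r) then show ?case by (auto intro: rset.base)
    next
      case (step u w)
      show ?case
      proof (cases "{u,w} = {i,j}")
        case True then have "w = i \<or> w = j" by blast
        then show ?thesis using ij by (auto intro: rset.base)
      next
        case False then show ?thesis using step by (auto intro: rset.step)
      qed
    qed
  qed
  have sg: "sgraph I F" and con: "connected_set F I" and cnt: "card F + 1 = card I"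
    using assms(1) by (auto simp: is_tree_def)
  have jI: "j \<in> I" using sg assms(2) by (auto simp: sgraph_def)
  have "I \<subseteq> rset F {j}"
  proof
    fix v assume "v \<in> I"
    then obtain xs where xs: "is_walk F xs" "hd xs = j" "last xs = v"
      using con jI unfolding connected_set_def by blast
    then have "xs \<noteq> []" by (simp add: is_walk_def)
    then show "v \<in> rset F {j}" using walk_rset[OF xs(1)] xs last_in_set by fastforce
  qed
  then have IFe: "I \<subseteq> rset ?Fe {j}" using sub by auto
  have finI: "finite I" using sg by (simp add: sgraph_def)
  have finF: "finite F" using sg finI by (intro finite_subset[of F "Pow I"]) (auto simp: sgraph_def)
  have pairs: "\<forall>e\<in>?Fe. \<exists>a b. e = {a,b}" using sg unfolding sgraph_def by (metis DiffD1 card_2_iff)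
  have "card I \<le> card ?Fe + card {j}"
    using count_lemma[of ?Fe I "{j}"] finF finI pairs IFe by auto
  also have "\<dots> = card F"
  proof -
    have "card ?Fe = card F - 1" using finF assms(2) by (simp add: card_Diff_singleton)
    moreover have "card F > 0" using finF assms(2) card_gt_0_iff by blast
    ultimately show ?thesis by simp
  qed
  finally show False using cnt by simp
qed

lemma crossing:
  "xs \<noteq> [] \<Longrightarrow> hd xs \<notin> C \<Longrightarrow> last xs \<in> C \<Longrightarrow> \<exists>k. Suc k < length xs \<and> xs ! k \<notin> C \<and> xs ! Suc k \<in> C"
proof (induct xs)
  case Nil then show ?case by simp
next
  case (Cons a xs)
  show ?case
  proof (cases "xs = []")
    case True then show ?thesis using Cons by simp
  next
    case False
    show ?thesis
    proof (cases "hd xs \<in> C")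
      case True then show ?thesis using Cons.prems(2) False
        by (intro exI[of _ 0]) (auto simp: hd_conv_nth)
    next
      case nC: False
      then obtain k where "Suc k < length xs" "xs ! k \<notin> C" "xs ! Suc k \<in> C"
        using Cons.hyps False Cons.prems(3) by auto
      then show ?thesis by (intro exI[of _ "Suc k"]) auto
    qed
  qed
qed

lemma side:
  assumes "{i,j} \<in> F" "connected_set F T" "u \<in> T" "u \<notin> rset (F - {{i,j}}) {j}"
    "w \<in> T" "w \<in> rset (F - {{i,j}}) {j}"
  shows "i \<in> T \<and> j \<in> T"
proof -
  let ?C = "rset (F - {{i,j}}) {j}"
  obtain xs where xs: "is_walk F xs" "set xs \<subseteq> T" "hd xs = u" "last xs = w"
    using assms(2,3,5) unfolding connected_set_def by blast
  have "xs \<noteq> []" using xs(1) by (simp add: is_walk_def)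
  then obtain k where k: "Suc k < length xs" "xs ! k \<notin> ?C" "xs ! Suc k \<in> ?C"
    using crossing[of xs ?C] xs assms(4,6) by auto
  have e: "{xs ! k, xs ! Suc k} \<in> F" using xs(1) k(1) by (simp add: is_walk_def)
  have eq: "{xs ! k, xs ! Suc k} = {i,j}"
  proof (rule ccontr)
    assume "{xs ! k, xs ! Suc k} \<noteq> {i,j}"
    then have "{xs ! Suc k, xs ! k} \<in> F - {{i,j}}" using e by (simp add: insert_commute)
    then have "xs ! k \<in> ?C" by (rule rset.step[OF k(3)])
    then show False using k(2) by simp
  qed
  moreover have "xs ! k \<in> T" "xs ! Suc k \<in> T" using xs(2) k(1) by auto
  moreover have "i \<in> {xs ! k, xs ! Suc k}" by (metis eq insertI1)
  moreover have "j \<in> {xs ! k, xs ! Suc k}" by (metis eq insertI1 insert_commute)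
  ultimately show ?thesis by blast
qed

lemma key:
  assumes td: "tree_decomposition V' E' I F B" and w: "\<forall>l\<in>I. card (B l) \<le> 2 + 1"
    and fin: "finite V'"
    and p1: "is_path V' E' x y p1" and p2: "is_path V' E' x y p2" and p3: "is_path V' E' x y p3"
    and d12: "set p1 \<inter> set p2 = {x,y}" and d13: "set p1 \<inter> set p3 = {x,y}"
    and d23: "set p2 \<inter> set p3 = {x,y}"
  shows "\<exists>l\<in>I. x \<in> B l \<and> y \<in> B l"
proof (rule ccontr)
  assume nb: "\<not> ?thesis"
  have tree: "is_tree I F" and bagV: "\<forall>l\<in>I. B l \<subseteq> V'" and cov: "\<forall>v\<in>V'. \<exists>l\<in>I. v \<in> B l"
    and edg: "\<forall>e\<in>E'. \<exists>l\<in>I. e \<subseteq> B l" and conv: "\<forall>v\<in>V'. connected_set F {l\<in>I. v \<in> B l}"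
    using td by (auto simp: tree_decomposition_def)
  have conI: "connected_set F I" and sgI: "sgraph I F" using tree by (auto simp: is_tree_def)
  define Tx where "Tx = {l\<in>I. x \<in> B l}"
  define Ty where "Ty = {l\<in>I. y \<in> B l}"
  have disj: "Tx \<inter> Ty = {}" using nb by (auto simp: Tx_def Ty_def)
  have p1ne: "p1 \<noteq> []" using p1 by (simp add: is_path_def is_walk_def)
  have xV: "x \<in> V'" and yV: "y \<in> V'"
    using p1 p1ne hd_in_set[OF p1ne] last_in_set[OF p1ne] by (auto simp: is_path_def)
  obtain p0 where p0: "p0 \<in> Tx" using cov xV by (auto simp: Tx_def)
  obtain q where q: "q \<in> Ty" using cov yV by (auto simp: Ty_def)
  obtain ws where ws: "is_walk F ws" "set ws \<subseteq> I" "hd ws = p0" "last ws = q"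
    using conI p0 q unfolding connected_set_def Tx_def Ty_def by blast
  have wsne: "ws \<noteq> []" using ws(1) by (simp add: is_walk_def)
  define K where "K = {m. m < length ws \<and> ws ! m \<in> Tx}"
  have K0: "0 \<in> K" using wsne ws(3) p0 by (simp add: K_def hd_conv_nth)
  have finK: "finite K" unfolding K_def by simp
  define k where "k = Max K"
  have kK: "k \<in> K" using K0 finK Max_in k_def by blast
  have kmax: "m \<le> k" if "m < length ws" "ws ! m \<in> Tx" for m
    using that finK Max_ge k_def K_def by blast
  have kl: "Suc k < length ws"
  proof (rule ccontr)
    assume "\<not> Suc k < length ws"
    then have "k = length ws - 1" using kK unfolding K_def by auto
    then have "ws ! k = q" using ws(4) wsne by (simp add: last_conv_nth)
    then show False using kK q disj by (auto simp: K_def)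
  qed
  define i where "i = ws ! k"
  define j where "j = ws ! Suc k"
  have ij: "{i,j} \<in> F" using ws(1) kl by (simp add: is_walk_def i_def j_def)
  have iTx: "i \<in> Tx" using kK by (simp add: K_def i_def)
  have jTx: "j \<notin> Tx" using kmax[of "Suc k"] kl by (auto simp: j_def)
  have iI: "i \<in> I" and jI: "j \<in> I" using ij sgI by (auto simp: sgraph_def)
  define C where "C = rset (F - {{i,j}}) {j}"
  have wsC: "Suc k \<le> m \<longrightarrow> m < length ws \<longrightarrow> ws ! m \<in> C" for m
  proof (induct m)
    case 0 then show ?case by simp
  next
    case (Suc m)
    show ?case
    proof (intro impI)
      assume a: "Suc k \<le> Suc m" "Suc m < length ws"
      show "ws ! Suc m \<in> C"
      proof (cases "m = k")
        case True then show ?thesis by (simp add: C_def j_def rset.base)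
      next
        case False
        then have mC: "ws ! m \<in> C" using Suc a by simp
        have e: "{ws ! m, ws ! Suc m} \<in> F" using ws(1) a by (simp add: is_walk_def)
        have "ws ! m \<notin> Tx" using kmax[of m] a False by auto
        then have "ws ! m \<noteq> i" using iTx by auto
        moreover have "ws ! Suc m \<notin> Tx" using kmax[of "Suc m"] a by auto
        then have "ws ! Suc m \<noteq> i" using iTx by auto
        ultimately have "{ws ! m, ws ! Suc m} \<noteq> {i,j}" by (metis doubleton_eq_iff)
        then have "{ws ! m, ws ! Suc m} \<in> F - {{i,j}}" using e by simp
        then show ?thesis using mC unfolding C_def by (rule rset.step[rotated])
      qed
    qed
  qed
  have qC: "q \<in> C"
  proof -
    have "ws ! (length ws - 1) \<in> C" using wsC[of "length ws - 1"] kl by simp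
    then show ?thesis using ws(4) wsne by (simp add: last_conv_nth)
  qed
  have iC: "i \<notin> C" using tree_cut[OF tree ij] by (simp add: C_def)
  have TyC: "Ty \<subseteq> C"
  proof
    fix l assume l: "l \<in> Ty"
    show "l \<in> C"
    proof (rule ccontr)
      assume "l \<notin> C"
      then have "i \<in> Ty" using side[OF ij, of Ty l q] conv yV l q qC unfolding Ty_def C_def by blast
      then show False using iTx disj by auto
    qed
  qed
  have TxC: "Tx \<inter> C = {}"
  proof (rule ccontr)
    assume "Tx \<inter> C \<noteq> {}"
    then obtain l where l: "l \<in> Tx" "l \<in> C" by auto
    then have "j \<in> Tx" using side[OF ij, of Tx i l] conv xV iTx iC unfolding Tx_def C_def by blast
    then show False using jTx by simp
  qed
  have hit: "\<exists>z\<in>set p. z \<in> B i \<and> z \<in> B j" if pp: "is_path V' E' x y p" for p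
  proof (rule ccontr)
    assume nh: "\<not> (\<exists>z\<in>set p. z \<in> B i \<and> z \<in> B j)"
    have pne: "p \<noteq> []" and pw: "is_walk E' p" and pV: "set p \<subseteq> V'" and ph: "hd p = x"
      and pl: "last p = y"
      using pp by (auto simp: is_path_def is_walk_def)
    have all: "m < length p \<longrightarrow> {l\<in>I. p ! m \<in> B l} \<inter> C = {}" for m
    proof (induct m)
      case 0 then show ?case using TxC ph pne by (auto simp: Tx_def hd_conv_nth)
    next
      case (Suc m)
      show ?case
      proof
        assume a: "Suc m < length p"
        have e: "{p ! m, p ! Suc m} \<in> E'" using pw a by (simp add: is_walk_def)
        then obtain l where l: "l \<in> I" "{p ! m, p ! Suc m} \<subseteq> B l" using edg by blast
        have lC: "l \<notin> C" using Suc a l by auto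
        have bV: "p ! Suc m \<in> V'" using pV a nth_mem by blast
        show "{l\<in>I. p ! Suc m \<in> B l} \<inter> C = {}"
        proof (rule ccontr)
          assume "{l\<in>I. p ! Suc m \<in> B l} \<inter> C \<noteq> {}"
          then obtain l' where l': "l' \<in> I" "p ! Suc m \<in> B l'" "l' \<in> C" by auto
          have "i \<in> {l\<in>I. p ! Suc m \<in> B l} \<and> j \<in> {l\<in>I. p ! Suc m \<in> B l}"
            using side[OF ij, of "{l\<in>I. p ! Suc m \<in> B l}" l l'] conv bV l l' lC
            unfolding C_def by blast
          then show False using nh a nth_mem by blast
        qed
      qed
    qed
    have "{l\<in>I. p ! (length p - 1) \<in> B l} \<inter> C = {}" using all[of "length p - 1"] pne by simp
    then have "Ty \<inter> C = {}" using pl pne by (simp add: Ty_def last_conv_nth)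
    then show False using TyC q by auto
  qed
  obtain z1 where z1: "z1 \<in> set p1" "z1 \<in> B i" "z1 \<in> B j" using hit[OF p1] by blast
  obtain z2 where z2: "z2 \<in> set p2" "z2 \<in> B i" "z2 \<in> B j" using hit[OF p2] by blast
  obtain z3 where z3: "z3 \<in> set p3" "z3 \<in> B i" "z3 \<in> B j" using hit[OF p3] by blast
  have xBj: "x \<notin> B j" using jTx jI by (simp add: Tx_def)
  have yBi: "y \<notin> B i" using iTx disj iI by (auto simp: Ty_def)
  have xBi: "x \<in> B i" using iTx by (simp add: Tx_def)
  have nz: "z1 \<noteq> x" "z1 \<noteq> y" "z2 \<noteq> x" "z2 \<noteq> y" "z3 \<noteq> x" "z3 \<noteq> y"
    using z1 z2 z3 xBj yBi by auto
  have "z1 \<noteq> z2" using d12 z1 z2 nz by blast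
  moreover have "z1 \<noteq> z3" using d13 z1 z3 nz by blast
  moreover have "z2 \<noteq> z3" using d23 z2 z3 nz by blast
  ultimately have c4: "card {x,z1,z2,z3} = 4" using nz by auto
  have sub: "{x,z1,z2,z3} \<subseteq> B i" using xBi z1 z2 z3 by auto
  have "finite (B i)" using bagV iI fin finite_subset by blast
  then have "card {x,z1,z2,z3} \<le> card (B i)" using sub card_mono by blast
  then show False using c4 w iI by fastforce
qed

lemma td_edges:
  assumes "tree_decomposition V E I F B" "\<forall>e\<in>E'. \<exists>l\<in>I. e \<subseteq> B l"
  shows "tree_decomposition V E' I F B"
  using assms unfolding tree_decomposition_def by blast

theorem mainTheorem6:
  fixes V :: "'a set" and E :: "'a set set" and t :: nat and x y :: 'a
    and P :: "nat \<Rightarrow> 'a list"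
  assumes "sgraph V E"
    and "x \<in> V" "y \<in> V" "x \<noteq> y" "{x, y} \<notin> E"
    and "\<forall>i < t + 3. is_path V E x y (P i)"
    and "\<forall>i < t + 3. \<forall>j < t + 3. i \<noteq> j \<longrightarrow> set (P i) \<inter> set (P j) = {x, y}"
  shows "has_solution V E t \<longleftrightarrow> has_solution V (insert {x, y} E) t"
proof
  assume "has_solution V (insert {x,y} E) t"
  then obtain S where S: "is_solution V (insert {x,y} E) t S" by (auto simp: has_solution_def)
  then obtain I :: "nat set" and F B where td: "tree_decomposition (V - S) (del_verts_E (insert {x,y} E) S) I F B"
    and w: "\<forall>i\<in>I. card (B i) \<le> 2+1"
    by (auto simp: is_solution_def treewidth_le_def)
  have "tree_decomposition (V - S) (del_verts_E E S) I F B"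
  proof (rule td_edges[OF td])
    show "\<forall>e\<in>del_verts_E E S. \<exists>l\<in>I. e \<subseteq> B l"
      using td unfolding tree_decomposition_def del_verts_E_def by blast
  qed
  then show "has_solution V E t" using S w
    by (auto simp: has_solution_def is_solution_def treewidth_le_def)
next
  assume "has_solution V E t"
  then obtain S where S: "is_solution V E t S" by (auto simp: has_solution_def)
  then obtain I :: "nat set" and F B where td: "tree_decomposition (V - S) (del_verts_E E S) I F B"
    and w: "\<forall>i\<in>I. card (B i) \<le> 2+1"
    by (auto simp: is_solution_def treewidth_le_def)
  have SV: "S \<subseteq> V" and cS: "card S \<le> t" using S by (auto simp: is_solution_def)
  have finV: "finite V" using assms(1) by (simp add: sgraph_def)
  have finS: "finite S" using SV finV finite_subset by blast
  have td': "tree_decomposition (V - S) (del_verts_E (insert {x,y} E) S) I F B"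
  proof (cases "x \<in> S \<or> y \<in> S")
    case True
    then have eq: "del_verts_E (insert {x,y} E) S = del_verts_E E S"
      unfolding del_verts_E_def by blast
    show ?thesis by (subst eq) (rule td)
  next
    case False
    note nxy = False
    define H where "H = {i. i < t + 3 \<and> set (P i) \<inter> S \<noteq> {}}"
    define f where "f i = (SOME s. s \<in> set (P i) \<inter> S)" for i
    have fH: "f i \<in> set (P i) \<inter> S" if "i \<in> H" for i
    proof -
      have "set (P i) \<inter> S \<noteq> {}" using that by (simp add: H_def)
      then show ?thesis unfolding f_def by (rule some_in_eq[THEN iffD2])
    qed
    have "inj_on f H"
    proof
      fix i j assume ij: "i \<in> H" "j \<in> H" "f i = f j"
      show "i = j"
      proof (rule ccontr)
        assume "i \<noteq> j"
        moreover have "i < t + 3" "j < t + 3" using ij by (simp_all add: H_def)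
        ultimately have d: "set (P i) \<inter> set (P j) = {x,y}" using assms(7) by blast
        have "f i \<in> set (P j)" using fH[OF ij(2)] ij(3) by simp
        moreover have "f i \<in> set (P i)" "f i \<in> S" using fH[OF ij(1)] by simp_all
        ultimately have "f i \<in> {x,y}" using d by blast
        then show False using \<open>f i \<in> S\<close> nxy by auto
      qed
    qed
    moreover have "f ` H \<subseteq> S" using fH by blast
    ultimately have "card H \<le> card S" using finS card_inj_on_le by blast
    then have cH: "card H \<le> t" using cS by simp
    define G where "G = {..<t+3} - H"
    have "H \<subseteq> {..<t+3}" by (auto simp: H_def)
    then have "card G = t + 3 - card H" unfolding G_def
      by (simp add: card_Diff_subset finite_subset)
    then have "card G \<ge> 3" using cH by simp
    then obtain A where A: "A \<subseteq> G" "card A = 3"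
      using obtain_subset_with_card_n by metis
    then obtain a b c where abc: "A = {a,b,c}" "a \<noteq> b" "b \<noteq> c" "a \<noteq> c"
      using card_3_iff by metis
    have inG: "a \<in> G" "b \<in> G" "c \<in> G" using A abc by auto
    have pth: "is_path (V - S) (del_verts_E E S) x y (P r)" if "r \<in> G" for r
    proof -
      have r: "r < t + 3" "set (P r) \<inter> S = {}" using that by (auto simp: G_def H_def)
      have pr: "is_path V E x y (P r)" using assms(6) r by blast
      have nS: "\<forall>i<length (P r). P r ! i \<notin> S" using r(2) nth_mem by blast
      show ?thesis
        using pr r(2) nS unfolding is_path_def is_walk_def del_verts_E_def
        by (auto dest: Suc_lessD)
    qed
    have dj: "set (P r) \<inter> set (P s) = {x,y}" if "r \<in> G" "s \<in> G" "r \<noteq> s" for r s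
      using assms(7) that by (auto simp: G_def)
    have finVS: "finite (V - S)" using finV by simp
    have "\<exists>l\<in>I. x \<in> B l \<and> y \<in> B l"
      by (rule key[OF td w finVS pth[OF inG(1)] pth[OF inG(2)] pth[OF inG(3)]
            dj[OF inG(1,2) abc(2)] dj[OF inG(1,3) abc(4)] dj[OF inG(2,3) abc(3)]])
    then have "\<exists>l\<in>I. {x,y} \<subseteq> B l" by auto
    moreover have "del_verts_E (insert {x,y} E) S = insert {x,y} (del_verts_E E S)"
      using False by (auto simp: del_verts_E_def)
    moreover have "\<forall>e\<in>del_verts_E E S. \<exists>l\<in>I. e \<subseteq> B l"
      using td unfolding tree_decomposition_def by blast
    ultimately show ?thesis by (intro td_edges[OF td]) simp
  qed
  then show "has_solution V (insert {x,y} E) t" using S w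
    by (auto simp: has_solution_def is_solution_def treewidth_le_def)
qed

end
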